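(* Let $\gamma_1,\dots,\gamma_N\in\mathbb{R}$ and $\alpha_1,\dots,\alpha_N>0$, and let $K(t)=\sum_{j=1}^N\gamma_je^{-\alpha_jt}$, whose Laplace transform is $k(\lambda)=\sum_{j=1}^N\frac{\gamma_j}{\lambda+\alpha_j}$. Then $K(t)\ge0$ for all $t\ge0$ if and only if $\sum_{j=1}^N\frac{\gamma_j}{(\lambda+\alpha_j)^m}\ge0$ for every integer $m\ge1$ and every $\lambda>0$. *)

theory Defs
  imports Complex_Main
begin

end

theory Submission
  imports Defs "HOL-Probability.Distributions"
begin

lemma erlang_int1:
  assumes "0 < c"
  shows "has_bochner_integral lborel (erlang_density k c) 1"
proof (rule has_bochner_integral_nn_integral)
  show "(\<integral>\<^sup>+ x. ennreal (erlang_density k c x) \<partial>lborel) = ennreal 1"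
    using nn_integral_erlang_ith_moment[OF assms, of k 0] by simp
  show "AE x in lborel. 0 \<le> erlang_density k c x" using assms by simp
qed auto

lemma h1: "(t::real) > 0 \<Longrightarrow> s > 0 \<Longrightarrow> s/t + a = s/t*(1+a*t/s)"
  by (simp add: field_simps)

lemma h2: "(c::real) \<noteq> 0 \<Longrightarrow> (f::real) \<noteq> 0 \<Longrightarrow>
  g / c^m * (c^m * X * (A*B) / f) = X*A/f*(g*B)"
  by (simp add: field_simps)

lemma h3: "(s::real) \<noteq> 0 \<Longrightarrow> 1+y \<noteq> 0 \<Longrightarrow> g/(1+y)^m = s^m*(g/(s*(1+y))^m)"
  by (simp add: power_mult_distrib)

lemma fwd:
  fixes N :: nat and \<gamma> \<alpha> :: "nat \<Rightarrow> real"
  assumes a: "\<And>j. j \<in> {1..N} \<Longrightarrow> \<alpha> j > 0"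
    and H: "\<forall>t\<ge>0. (\<Sum>j=1..N. \<gamma> j * exp (- \<alpha> j * t)) \<ge> 0"
    and l: "l > 0"
  shows "(\<Sum>j=1..N. \<gamma> j / (l + \<alpha> j) ^ Suc k) \<ge> 0"
proof -
  have hb: "has_bochner_integral lborel
     (\<lambda>x. \<Sum>j=1..N. \<gamma> j / (l + \<alpha> j) ^ Suc k * erlang_density k (l + \<alpha> j) x)
     (\<Sum>j=1..N. \<gamma> j / (l + \<alpha> j) ^ Suc k * 1)"
  proof (rule has_bochner_integral_sum)
    fix j assume "j \<in> {1..N}"
    then have "0 < l + \<alpha> j" using a[of j] l by simp
    then show "has_bochner_integral lborel
      (\<lambda>x. \<gamma> j / (l + \<alpha> j) ^ Suc k * erlang_density k (l + \<alpha> j) x)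
      (\<gamma> j / (l + \<alpha> j) ^ Suc k * 1)"
      by (intro has_bochner_integral_mult_right erlang_int1)
  qed
  have nn: "0 \<le> (\<Sum>j=1..N. \<gamma> j / (l + \<alpha> j) ^ Suc k * erlang_density k (l + \<alpha> j) x)" for x
  proof (cases "x < 0")
    case True then show ?thesis by (simp add: erlang_density_def)
  next
    case False
    have "(\<Sum>j=1..N. \<gamma> j / (l + \<alpha> j) ^ Suc k * erlang_density k (l + \<alpha> j) x)
        = (\<Sum>j=1..N. (x^k * exp (-l*x) / fact k) * (\<gamma> j * exp (- \<alpha> j * x)))"
    proof (rule sum.cong)
      fix j assume "j \<in> {1..N}"
      then have p: "0 < l + \<alpha> j" using a[of j] l by simp
      have e: "exp (- (l + \<alpha> j) * x) = exp (-l*x) * exp (- \<alpha> j * x)"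
        by (simp add: algebra_simps flip: exp_add)
      show "\<gamma> j / (l + \<alpha> j) ^ Suc k * erlang_density k (l + \<alpha> j) x
          = (x^k * exp (-l*x) / fact k) * (\<gamma> j * exp (- \<alpha> j * x))"
        unfolding erlang_density_def e using False p h2[of "l + \<alpha> j" "fact k"] by simp
    qed simp
    also have "\<dots> = (x^k * exp (-l*x) / fact k) * (\<Sum>j=1..N. \<gamma> j * exp (- \<alpha> j * x))"
      by (simp add: sum_distrib_left)
    also have "\<dots> \<ge> 0" using False H by (intro mult_nonneg_nonneg) auto
    finally show ?thesis .
  qed
  have "integral\<^sup>L lborel
     (\<lambda>x. \<Sum>j=1..N. \<gamma> j / (l + \<alpha> j) ^ Suc k * erlang_density k (l + \<alpha> j) x) \<ge> 0"
    by (intro integral_nonneg_AE AE_I2 nn)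
  then show ?thesis using has_bochner_integral_integral_eq[OF hb] by simp
qed

lemma bwd:
  fixes N :: nat and \<gamma> \<alpha> :: "nat \<Rightarrow> real"
  assumes a: "\<And>j. j \<in> {1..N} \<Longrightarrow> \<alpha> j > 0"
    and H: "\<forall>m::nat\<ge>1. \<forall>l::real>0. (\<Sum>j=1..N. \<gamma> j / (l + \<alpha> j) ^ m) \<ge> 0"
    and t: "t \<ge> 0"
  shows "(\<Sum>j=1..N. \<gamma> j * exp (- \<alpha> j * t)) \<ge> 0"
proof (cases "t = 0")
  case True
  define b where "b n = (\<Sum>j=1..N. \<gamma> j * (1 / (1 + \<alpha> j / real (Suc n))))" for n
  have lim: "b \<longlonglongrightarrow> (\<Sum>j=1..N. \<gamma> j * (1 / (1 + 0)))"
    unfolding b_def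
    by (intro tendsto_intros LIMSEQ_Suc[OF lim_const_over_n]) auto
  have "b n \<ge> 0" for n
  proof -
    have "b n = real (Suc n) * (\<Sum>j=1..N. \<gamma> j / (real (Suc n) + \<alpha> j) ^ 1)"
      unfolding b_def sum_distrib_left
    proof (rule sum.cong)
      fix j assume "j \<in> {1..N}"
      then have "\<alpha> j > 0" by (rule a)
      then show "\<gamma> j * (1 / (1 + \<alpha> j / real (Suc n))) = real (Suc n) * (\<gamma> j / (real (Suc n) + \<alpha> j) ^ 1)"
        by (simp add: field_simps)
    qed simp
    also have "\<dots> \<ge> 0" using H by (intro mult_nonneg_nonneg) auto
    finally show ?thesis .
  qed
  then have "(\<Sum>j=1..N. \<gamma> j * (1 / (1 + 0))) \<ge> 0"
    by (intro LIMSEQ_le_const[OF lim]) auto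
  then show ?thesis using True by simp
next
  case False
  with t have tp: "t > 0" by simp
  define b where "b n = (\<Sum>j=1..N. \<gamma> j / (1 + (\<alpha> j * t) / real (Suc n)) ^ Suc n)" for n
  have l1: "(\<lambda>n. (1 + x / real (Suc n)) ^ Suc n) \<longlonglongrightarrow> exp x" for x
    using LIMSEQ_Suc[OF tendsto_exp_limit_sequentially[of x]] by simp
  have lim: "b \<longlonglongrightarrow> (\<Sum>j=1..N. \<gamma> j / exp (\<alpha> j * t))"
    unfolding b_def
    by (intro tendsto_sum tendsto_divide tendsto_const l1) auto
  have "b n \<ge> 0" for n
  proof -
    have "b n = (real (Suc n) / t) ^ Suc n * (\<Sum>j=1..N. \<gamma> j / (real (Suc n) / t + \<alpha> j) ^ Suc n)"
      unfolding b_def sum_distrib_left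
    proof (rule sum.cong)
      fix j assume "j \<in> {1..N}"
      have e: "real (Suc n) / t + \<alpha> j = (real (Suc n) / t) * (1 + \<alpha> j * t / real (Suc n))"
        using tp h1[of t "real (Suc n)"] by simp
      show "\<gamma> j / (1 + (\<alpha> j * t) / real (Suc n)) ^ Suc n =
        (real (Suc n) / t) ^ Suc n * (\<gamma> j / (real (Suc n) / t + \<alpha> j) ^ Suc n)"
        unfolding e using tp a[OF \<open>j \<in> {1..N}\<close>]
        by (intro h3) (auto, smt (verit) divide_nonneg_pos mult_pos_pos of_nat_0_le_iff)
    qed simp
    also have "\<dots> \<ge> 0"
    proof (rule mult_nonneg_nonneg)
      show "0 \<le> (\<Sum>j=1..N. \<gamma> j / (real (Suc n) / t + \<alpha> j) ^ Suc n)"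
        using H tp by (metis divide_pos_pos le_add1 of_nat_0_less_iff plus_1_eq_Suc zero_less_Suc)
    qed (use tp in auto)
    finally show ?thesis .
  qed
  then have "(\<Sum>j=1..N. \<gamma> j / exp (\<alpha> j * t)) \<ge> 0"
    by (intro LIMSEQ_le_const[OF lim]) auto
  then show ?thesis by (simp add: exp_minus divide_inverse)
qed

theorem lemma5p1:
  fixes N :: nat and \<gamma> \<alpha> :: "nat \<Rightarrow> real"
  assumes "\<And>j. j \<in> {1..N} \<Longrightarrow> \<alpha> j > 0"
  shows "(\<forall>t\<ge>0. (\<Sum>j=1..N. \<gamma> j * exp (- \<alpha> j * t)) \<ge> 0) \<longleftrightarrow>
         (\<forall>m::nat\<ge>1. \<forall>l::real>0. (\<Sum>j=1..N. \<gamma> j / (l + \<alpha> j) ^ m) \<ge> 0)"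
proof
  assume H: "\<forall>t\<ge>0. (\<Sum>j=1..N. \<gamma> j * exp (- \<alpha> j * t)) \<ge> 0"
  show "\<forall>m::nat\<ge>1. \<forall>l::real>0. (\<Sum>j=1..N. \<gamma> j / (l + \<alpha> j) ^ m) \<ge> 0"
  proof (intro allI impI)
    fix m :: nat and l :: real assume "m \<ge> 1" "l > 0"
    then obtain k where "m = Suc k" by (cases m) auto
    then show "(\<Sum>j=1..N. \<gamma> j / (l + \<alpha> j) ^ m) \<ge> 0"
      using fwd[OF assms H \<open>l > 0\<close>] by simp
  qed
next
  assume "\<forall>m::nat\<ge>1. \<forall>l::real>0. (\<Sum>j=1..N. \<gamma> j / (l + \<alpha> j) ^ m) \<ge> 0"
  then show "\<forall>t\<ge>0. (\<Sum>j=1..N. \<gamma> j * exp (- \<alpha> j * t)) \<ge> 0"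
    using bwd[of N \<alpha> \<gamma>] assms by blast
qed

end
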